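(* Let $G$ be a graph on at most $n$ vertices that contains no copy of the complete graph $K_5$. Then $\tilde b(G)\le 3^{n/4}$.
   Context: $\mathrm{Ind}(G)$ is the independence complex of $G$ (including the empty face), and $\tilde b(G)=\sum_{i\ge-1}\dim_{\mathbb{K}}\widetilde H_i(\mathrm{Ind}(G);\mathbb{K})$ for a fixed field $\mathbb{K}$; the empty graph has $\tilde b=1$. *)

theory Defs
  imports Complex_Main "HOL-Library.Function_Algebras"
begin

definition simple_graph :: "'a set \<Rightarrow> 'a set set \<Rightarrow> bool" where
  "simple_graph V E \<longleftrightarrow> finite V \<and> (\<forall>e\<in>E. \<exists>u v. u \<in> V \<and> v \<in> V \<and> u \<noteq> v \<and> e = {u, v})"

definition has_clique :: "'a set \<Rightarrow> 'a set set \<Rightarrow> nat \<Rightarrow> bool" where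
  "has_clique V E r \<longleftrightarrow> (\<exists>S. S \<subseteq> V \<and> card S = r \<and> (\<forall>u\<in>S. \<forall>v\<in>S. u \<noteq> v \<longrightarrow> {u, v} \<in> E))"

definition ind_complex :: "'a set \<Rightarrow> 'a set set \<Rightarrow> 'a set set" where
  "ind_complex V E = {S. S \<subseteq> V \<and> (\<forall>u\<in>S. \<forall>v\<in>S. {u, v} \<notin> E)}"

text \<open>Simplicial chains with coefficients in a field 'k, indexed by the cardinality d of
  the faces (so d = i + 1 for the usual dimension i; d = 0 is the empty face, giving the
  augmented/reduced chain complex).\<close>
definition chains :: "'a set set \<Rightarrow> nat \<Rightarrow> ('a set \<Rightarrow> 'k::field) set" where
  "chains K d = {f. \<forall>\<sigma>. f \<sigma> \<noteq> 0 \<longrightarrow> \<sigma> \<in> K \<and> card \<sigma> = d}"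

text \<open>Sign of the face tau in the boundary of sigma = tau + {v}, vertices ordered increasingly:
  (-1)^(position of v in sigma).\<close>
definition bd_sign :: "'a::linorder set \<Rightarrow> 'a set \<Rightarrow> 'k::field" where
  "bd_sign \<sigma> \<tau> = (-1) ^ card {x \<in> \<tau>. x < the_elem (\<sigma> - \<tau>)}"

definition boundary :: "'a::linorder set set \<Rightarrow> ('a set \<Rightarrow> 'k::field) \<Rightarrow> ('a set \<Rightarrow> 'k)" where
  "boundary K f = (\<lambda>\<tau>. \<Sum>\<sigma>\<in>{\<sigma>\<in>K. \<tau> \<subseteq> \<sigma> \<and> card \<sigma> = card \<tau> + 1}. bd_sign \<sigma> \<tau> * f \<sigma>)"

definition fdim :: "('b \<Rightarrow> 'k::field) set \<Rightarrow> nat" where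
  "fdim S = vector_space.dim (\<lambda>c f x. c * f x) S"

text \<open>Reduced Betti number in degree d - 1:
  dim ker(bd : C_d \<rightarrow> C_(d-1)) - dim im(bd : C_(d+1) \<rightarrow> C_d), where bd on C_0 is the zero map
  (C_(-1) = 0).\<close>
definition reduced_betti :: "'k::field itself \<Rightarrow> 'a::linorder set set \<Rightarrow> nat \<Rightarrow> nat" where
  "reduced_betti _ K d =
     fdim {f \<in> (chains K d :: ('a set \<Rightarrow> 'k) set). d = 0 \<or> boundary K f = (\<lambda>_. 0)}
     - fdim (boundary K ` (chains K (Suc d) :: ('a set \<Rightarrow> 'k) set))"

text \<open>Total reduced Betti number b~ of a finite complex on vertex set V:
  sum over all degrees i \<ge> -1, i.e. over face cardinalities d = 0 .. |V|
  (all chain groups vanish beyond that).\<close>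
definition total_reduced_betti :: "'k::field itself \<Rightarrow> 'a::linorder set \<Rightarrow> 'a set set \<Rightarrow> nat" where
  "total_reduced_betti k V K = (\<Sum>d\<le>card V. reduced_betti k K d)"

definition btilde :: "'k::field itself \<Rightarrow> 'a::linorder set \<Rightarrow> 'a set set \<Rightarrow> nat" where
  "btilde k V E = total_reduced_betti k V (ind_complex V E)"

end

theory Submission
  imports Defs
begin

abbreviation sc :: "'k::field \<Rightarrow> ('b \<Rightarrow> 'k) \<Rightarrow> ('b \<Rightarrow> 'k)" where
  "sc \<equiv> (\<lambda>c f x. c * f x)"

interpretation fv: vector_space "sc :: 'k::field \<Rightarrow> ('b \<Rightarrow> 'k) \<Rightarrow> ('b \<Rightarrow> 'k)"
  by unfold_locales (auto simp: algebra_simps)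

interpretation fvp: vector_space_pair "sc :: 'k::field \<Rightarrow> ('b \<Rightarrow> 'k) \<Rightarrow> ('b \<Rightarrow> 'k)"
   "sc :: 'k::field \<Rightarrow> ('c \<Rightarrow> 'k) \<Rightarrow> ('c \<Rightarrow> 'k)"
  by unfold_locales

lemma fdim_eq: "fdim S = fv.dim S" by (simp add: fdim_def)

lemma fv_span_inter_zero:
  fixes A B :: "('b \<Rightarrow> 'k::field) set"
  assumes ind: "fv.independent (A \<union> B)" and dis: "A \<inter> B = {}" and fA: "finite A" and fB: "finite B"
    and xA: "x \<in> fv.span A" and xB: "x \<in> fv.span B"
  shows "x = 0"
proof -
  obtain u where u: "x = (\<Sum>a\<in>A. sc (u a) a)" using xA fv.span_finite[OF fA] by auto
  obtain w where w: "x = (\<Sum>a\<in>B. sc (w a) a)" using xB fv.span_finite[OF fB] by auto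
  define t where "t v = (if v \<in> A then u v else - w v)" for v
  have "(\<Sum>v\<in>A \<union> B. sc (t v) v) = (\<Sum>v\<in>A. sc (t v) v) + (\<Sum>v\<in>B. sc (t v) v)"
    by (rule sum.union_disjoint) (use fA fB dis in auto)
  also have "(\<Sum>v\<in>A. sc (t v) v) = x" unfolding u by (rule sum.cong) (auto simp: t_def)
  also have "(\<Sum>v\<in>B. sc (t v) v) = (\<Sum>v\<in>B. - sc (w v) v)" by (rule sum.cong) (use dis in \<open>auto simp: t_def\<close>)
  also have "\<dots> = - x" unfolding w by (simp add: sum_negf)
  finally have z: "(\<Sum>v\<in>A \<union> B. sc (t v) v) = 0" by (simp add: zero_fun_def)
  have "\<And>a. a \<in> A \<Longrightarrow> u a = 0"
  proof -
    fix a assume a: "a \<in> A"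
    have "t a = 0" by (rule fv.independentD[OF ind _ subset_refl z]) (use fA fB a in auto)
    then show "u a = 0" using a by (simp add: t_def)
  qed
  then show ?thesis unfolding u by (simp add: fun_eq_iff)
qed

lemma fv_subspace_kernel:
  fixes f :: "('b \<Rightarrow> 'k::field) \<Rightarrow> ('c \<Rightarrow> 'k)"
  assumes lin: "Vector_Spaces.linear sc sc f" and S: "fv.subspace S"
  shows "fv.subspace {x\<in>S. f x = 0}"
  using S unfolding fv.subspace_def
  by (auto simp: fvp.linear_0[OF lin] fvp.linear_add[OF lin] fvp.linear_scale[OF lin, simplified])

lemma fv_rank_nullity:
  fixes f :: "('b \<Rightarrow> 'k::field) \<Rightarrow> ('c \<Rightarrow> 'k)"
  assumes lin: "Vector_Spaces.linear sc sc f" and S: "fv.subspace S" and F: "finite F" "S \<subseteq> fv.span F"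
  shows "fv.dim S = fv.dim (f ` S) + fv.dim {x\<in>S. f x = 0}"
proof -
  define N where "N = {x\<in>S. f x = 0}"
  have Nsub: "fv.subspace N" unfolding N_def by (rule fv_subspace_kernel[OF lin S])
  obtain Bk where Bk: "Bk \<subseteq> N" "fv.independent Bk" "N \<subseteq> fv.span Bk" "card Bk = fv.dim N"
    by (rule fv.basis_exists)
  have "Bk \<subseteq> S" using Bk(1) by (auto simp: N_def)
  then obtain B' where B': "Bk \<subseteq> B'" "B' \<subseteq> S" "fv.independent B'" "S \<subseteq> fv.span B'"
    using fv.maximal_independent_subset_extend[OF _ Bk(2)] by metis
  have fB': "finite B'" using fv.independent_span_bound[OF F(1) B'(3)] B'(2) F(2) by auto
  have dS: "fv.dim S = card B'" using fv.basis_card_eq_dim[OF B'(2,4,3)] by simp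
  define J where "J = B' - Bk"
  have fJ: "finite J" "finite Bk" using fB' B'(1) by (auto simp: J_def intro: finite_subset)
  have cB': "card B' = card Bk + card J"
  proof -
    have "B' = Bk \<union> J" "Bk \<inter> J = {}" using B'(1) by (auto simp: J_def)
    then show ?thesis using card_Un_disjoint[OF fJ(2) fJ(1)] by simp
  qed
  have spBk: "fv.span Bk \<subseteq> N" using Bk(1) Nsub by (rule fv.span_minimal)
  have spB'S: "fv.span B' \<subseteq> S" using B'(2) S by (rule fv.span_minimal)
  have BkJ: "Bk \<union> J = B'" "Bk \<inter> J = {}" using B'(1) by (auto simp: J_def)
  have indJ: "fv.independent J" using fv.independent_mono[OF B'(3), of J] unfolding J_def by blast
  have inj: "inj_on f (fv.span J)"
    unfolding fvp.linear_inj_on_iff_eq_0[OF lin fv.subspace_span]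
  proof (intro ballI impI)
    fix x assume x: "x \<in> fv.span J" "f x = 0"
    have "x \<in> S" using x(1) spB'S fv.span_mono[of J B'] by (auto simp: J_def)
    then have "x \<in> fv.span Bk" using x(2) Bk(3) by (auto simp: N_def)
    then show "x = 0" using fv_span_inter_zero[of Bk J x] BkJ B'(3) fJ x(1) by auto
  qed
  have injJ: "inj_on f J" using inj fv.span_superset inj_on_subset by blast
  have indfJ: "fv.independent (f ` J)" using fvp.linear_independent_injective_image[OF lin indJ inj] .
  have cfJ: "card (f ` J) = card J" using card_image[OF injJ] .
  have "f ` S \<subseteq> fv.span (f ` J)"
  proof
    fix y assume "y \<in> f ` S"
    then obtain x where x: "x \<in> S" "y = f x" by auto
    have "x \<in> fv.span (Bk \<union> J)" using x(1) B'(4) BkJ by auto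
    then obtain a b where ab: "x = a + b" "a \<in> fv.span Bk" "b \<in> fv.span J"
      unfolding fv.span_Un by auto
    have "f a = 0" using ab(2) spBk by (auto simp: N_def)
    then have "y = f b" using x(2) ab(1) fvp.linear_add[OF lin] by simp
    then show "y \<in> fv.span (f ` J)" using ab(3) fvp.linear_span_image[OF lin] by auto
  qed
  moreover have "f ` J \<subseteq> f ` S" using B'(2) by (auto simp: J_def)
  ultimately have dfS: "fv.dim (f ` S) = card J"
    using fv.dim_unique[of "f ` J" "f ` S"] indfJ cfJ by auto
  show ?thesis using dS dfS cB' Bk(4) unfolding N_def by simp
qed

lemma fv_dim_mono:
  fixes T S :: "('b \<Rightarrow> 'k::field) set"
  assumes "T \<subseteq> S" and F: "finite F" "S \<subseteq> fv.span F"
  shows "fv.dim T \<le> fv.dim S"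
proof -
  obtain Bt where Bt: "Bt \<subseteq> T" "fv.independent Bt" "T \<subseteq> fv.span Bt" "card Bt = fv.dim T"
    by (rule fv.basis_exists)
  then obtain B' where B': "Bt \<subseteq> B'" "B' \<subseteq> S" "fv.independent B'" "S \<subseteq> fv.span B'"
  proof -
    have "Bt \<subseteq> S" using Bt(1) assms(1) by auto
    from fv.maximal_independent_subset_extend[OF this Bt(2)] show ?thesis using that by blast
  qed
  have fB': "finite B'" using fv.independent_span_bound[OF F(1) B'(3)] B'(2) F(2) by auto
  have "fv.dim S = card B'" using fv.basis_card_eq_dim[OF B'(2,4,3)] by simp
  then show ?thesis using Bt(4) card_mono[OF fB' B'(1)] by simp
qed

lemma fv_dim_zero: "fv.dim {0::'b \<Rightarrow> 'k::field} = 0"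
  using fv.dim_unique[of "{}" "{0::'b \<Rightarrow> 'k}" 0] fv.independent_empty by auto

lemma fv_dim_inj:
  fixes f :: "('b \<Rightarrow> 'k::field) \<Rightarrow> ('c \<Rightarrow> 'k)"
  assumes lin: "Vector_Spaces.linear sc sc f" and S: "fv.subspace S" and F: "finite F" "S \<subseteq> fv.span F"
    and inj: "\<And>x. x \<in> S \<Longrightarrow> f x = 0 \<Longrightarrow> x = 0"
  shows "fv.dim (f ` S) = fv.dim S"
proof -
  have "{x\<in>S. f x = 0} = {0}" using inj fv.subspace_0[OF S] fvp.linear_0[OF lin] by auto
  then show ?thesis using fv_rank_nullity[OF lin S F] fv_dim_zero by simp
qed

lemma fv_dim_image_le:
  fixes f :: "('b \<Rightarrow> 'k::field) \<Rightarrow> ('c \<Rightarrow> 'k)"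
  assumes lin: "Vector_Spaces.linear sc sc f" and S: "fv.subspace S" and F: "finite F" "S \<subseteq> fv.span F"
  shows "fv.dim (f ` S) \<le> fv.dim S"
  using fv_rank_nullity[OF lin S F] by simp

lemma fv_linearI:
  fixes f :: "('b \<Rightarrow> 'k::field) \<Rightarrow> ('c \<Rightarrow> 'k)"
  assumes "\<And>x y. f (x + y) = f x + f y" and "\<And>c x. f (sc c x) = sc c (f x)"
  shows "Vector_Spaces.linear sc sc f"
  unfolding Vector_Spaces.linear_iff by (simp add: assms fv.vector_space_axioms)

lemma chains_subspace: "fv.subspace (chains K d)"
  unfolding fv.subspace_def chains_def by (auto; metis add.left_neutral)

lemma sum_fun_apply: "(\<Sum>i\<in>A. f i) x = (\<Sum>i\<in>A. f i x)"
  by (induction A rule: infinite_finite_induct) auto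

lemma boundary_linear: "Vector_Spaces.linear sc sc (boundary K)"
  by (rule fv_linearI)
     (auto simp: boundary_def fun_eq_iff sum.distrib distrib_left sum_distrib_left mult.left_commute)

definition delta :: "'b \<Rightarrow> 'b \<Rightarrow> 'k::field" where "delta s = (\<lambda>x. if x = s then 1 else 0)"

lemma supp_in_span:
  fixes f :: "'b \<Rightarrow> 'k::field"
  assumes P: "finite P" and f: "\<And>x. f x \<noteq> 0 \<Longrightarrow> x \<in> P"
  shows "f \<in> fv.span (delta ` P)"
proof -
  have "f = (\<Sum>s\<in>P. sc (f s) (delta s))"
  proof
    fix x
    have "(\<Sum>s\<in>P. sc (f s) (delta s)) x = (\<Sum>s\<in>P. f s * delta s x)"
      by (simp add: sum_fun_apply)
    also have "\<dots> = (if x \<in> P then f x else 0)"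
      by (simp add: delta_def P if_distrib[of "\<lambda>y. f _ * y"] cong: if_cong)
    also have "\<dots> = f x" using f by auto
    finally show "f x = (\<Sum>s\<in>P. sc (f s) (delta s)) x" by simp
  qed
  also have "\<dots> \<in> fv.span (delta ` P)"
    by (intro fv.span_sum fv.span_scale fv.span_base) auto
  finally show ?thesis .
qed

lemma supp_set_in_span:
  fixes S :: "('b \<Rightarrow> 'k::field) set"
  assumes "finite P" "\<And>f x. f \<in> S \<Longrightarrow> f x \<noteq> 0 \<Longrightarrow> x \<in> P"
  shows "S \<subseteq> fv.span (delta ` P)"
  using supp_in_span assms by blast

lemma chains_supp: "K \<subseteq> Pow V \<Longrightarrow> f \<in> chains K d \<Longrightarrow> f x \<noteq> 0 \<Longrightarrow> x \<in> Pow V"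
  unfolding chains_def by auto

lemma boundary_supp:
  assumes "K \<subseteq> Pow V" "boundary K f \<tau> \<noteq> 0" shows "\<tau> \<in> Pow V"
proof -
  from assms(2) obtain \<sigma> where "\<sigma> \<in> K" "\<tau> \<subseteq> \<sigma>" unfolding boundary_def
    by (metis (no_types, lifting) empty_Collect_eq sum.empty)
  then show ?thesis using assms(1) by auto
qed

lemma bd_zero_C0: "f \<in> chains K 0 \<Longrightarrow> boundary K f = 0"
  unfolding boundary_def chains_def by (auto simp: fun_eq_iff intro!: sum.neutral)

definition cdim :: "'k::field itself \<Rightarrow> 'a::linorder set set \<Rightarrow> nat \<Rightarrow> nat" where
  "cdim _ K d = fv.dim (chains K d :: ('a set \<Rightarrow> 'k) set)"
definition rk :: "'k::field itself \<Rightarrow> 'a::linorder set set \<Rightarrow> nat \<Rightarrow> nat" where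
  "rk _ K d = fv.dim (boundary K ` (chains K d :: ('a set \<Rightarrow> 'k) set))"

lemma betti_formula:
  assumes V: "finite V" and K: "K \<subseteq> Pow V"
  shows "reduced_betti TYPE('k::field) K d = (cdim TYPE('k) K d - rk TYPE('k) K d) - rk TYPE('k) K (Suc d)"
proof -
  have Z: "{f \<in> (chains K d :: ('a set \<Rightarrow> 'k) set). d = 0 \<or> boundary K f = (\<lambda>_. 0)}
     = {f \<in> chains K d. boundary K f = 0}"
    using bd_zero_C0[of _ K] by (auto simp: zero_fun_def)
  have sp: "(chains K d :: ('a set \<Rightarrow> 'k) set) \<subseteq> fv.span (delta ` Pow V)"
    by (rule supp_set_in_span) (use V chains_supp[OF K] in auto)
  have "cdim TYPE('k) K d = rk TYPE('k) K d +
      fv.dim {f \<in> (chains K d :: ('a set \<Rightarrow> 'k) set). boundary K f = 0}"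
    unfolding cdim_def rk_def
    by (rule fv_rank_nullity[OF boundary_linear chains_subspace _ sp]) (use V in simp)
  then show ?thesis unfolding reduced_betti_def Z fdim_eq rk_def by simp
qed

definition nb :: "'a set set \<Rightarrow> 'a \<Rightarrow> 'a set" where "nb E v = insert v {u. {u, v} \<in> E}"
definition pi_v :: "'a \<Rightarrow> ('a set \<Rightarrow> 'k::field) \<Rightarrow> ('a set \<Rightarrow> 'k)" where
  "pi_v v f = (\<lambda>\<sigma>. if v \<in> \<sigma> then f \<sigma> else 0)"
definition th_v :: "'a \<Rightarrow> ('a set \<Rightarrow> 'k::field) \<Rightarrow> ('a set \<Rightarrow> 'k)" where
  "th_v v f = (\<lambda>\<sigma>. if v \<in> \<sigma> then 0 else f \<sigma>)"
definition eps :: "'a::linorder \<Rightarrow> 'a set \<Rightarrow> 'k::field" where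
  "eps v \<rho> = (-1) ^ card {x\<in>\<rho>. v < x}"
definition phi_v :: "'a::linorder \<Rightarrow> ('a set \<Rightarrow> 'k::field) \<Rightarrow> ('a set \<Rightarrow> 'k)" where
  "phi_v v g = (\<lambda>\<rho>. if v \<in> \<rho> then 0 else eps v \<rho> * g (insert v \<rho>))"

lemma pi_linear: "Vector_Spaces.linear sc sc (pi_v v)"
  by (rule fv_linearI) (auto simp: pi_v_def fun_eq_iff)
lemma th_linear: "Vector_Spaces.linear sc sc (th_v v)"
  by (rule fv_linearI) (auto simp: th_v_def fun_eq_iff)
lemma phi_linear: "Vector_Spaces.linear sc sc (phi_v v)"
  by (rule fv_linearI) (auto simp: phi_v_def fun_eq_iff algebra_simps)

lemma eps_nz: "eps v \<rho> \<noteq> 0" by (simp add: eps_def)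
lemma eps_sq: "eps v \<rho> * eps v \<rho> = 1" by (simp add: eps_def power_mult_distrib[symmetric])
lemma bd_sign_nz: "bd_sign \<sigma> \<tau> \<noteq> 0" by (simp add: bd_sign_def)

lemma ind_sub: "ind_complex V E \<subseteq> Pow V" by (auto simp: ind_complex_def)
lemma ind_fin: "finite V \<Longrightarrow> \<sigma> \<in> ind_complex V E \<Longrightarrow> finite \<sigma>"
  by (auto simp: ind_complex_def intro: finite_subset)

lemma K1_char: "ind_complex (V - {v}) E = {\<sigma> \<in> ind_complex V E. v \<notin> \<sigma>}"
  by (auto simp: ind_complex_def)

lemma K2_char:
  assumes vV: "v \<in> V" and noloop: "\<forall>u. {u} \<notin> E"
  shows "\<rho> \<in> ind_complex (V - nb E v) E \<longleftrightarrow> v \<notin> \<rho> \<and> insert v \<rho> \<in> ind_complex V E"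
  using vV noloop unfolding ind_complex_def nb_def by (auto simp: insert_commute)

lemma boundary_sub:
  assumes "finite K" "K1 \<subseteq> K" "\<And>\<sigma>. f \<sigma> \<noteq> 0 \<Longrightarrow> \<sigma> \<in> K1"
  shows "boundary K f = boundary K1 f"
  unfolding boundary_def
  by (rule ext, rule sum.mono_neutral_right) (use assms in auto)


lemma card_filter_insert:
  assumes "finite A" "a \<notin> A"
  shows "card {x \<in> insert a A. P x} = card {x \<in> A. P x} + (if P a then 1 else 0)"
proof -
  have "{x \<in> insert a A. P x} = (if P a then insert a {x \<in> A. P x} else {x \<in> A. P x})" by auto
  then show ?thesis using assms by simp
qed

lemma sign_identity:
  fixes \<rho> :: "'a::linorder set"
  assumes "finite \<rho>" "v \<notin> \<rho>" "u \<notin> \<rho>" "u \<noteq> v"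
  shows "eps v \<rho> * bd_sign (insert v (insert u \<rho>)) (insert v \<rho>) = (bd_sign (insert u \<rho>) \<rho> * eps v (insert u \<rho>) :: 'k::field)"
proof -
  have d1: "insert v (insert u \<rho>) - insert v \<rho> = {u}" using assms by auto
  have d2: "insert u \<rho> - \<rho> = {u}" using assms by auto
  have c1: "card {x\<in>insert v \<rho>. x < u} = card {x\<in>\<rho>. x < u} + (if v < u then 1 else 0)"
    by (rule card_filter_insert) (use assms in auto)
  have c2: "card {x\<in>insert u \<rho>. v < x} = card {x\<in>\<rho>. v < x} + (if v < u then 1 else 0)"
    by (rule card_filter_insert) (use assms in auto)
  show ?thesis unfolding bd_sign_def eps_def d1 d2 the_elem_eq c1 c2
    by (simp add: power_add)
qed

context
  fixes V :: "'a::linorder set" and E :: "'a set set" and v :: 'a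
  assumes finV: "finite V" and vV: "v \<in> V" and noloop: "\<forall>u. {u} \<notin> E"
begin

definition Bset :: "nat \<Rightarrow> ('a set \<Rightarrow> 'k::field) set" where
  "Bset d = {g. \<forall>\<sigma>. g \<sigma> \<noteq> 0 \<longrightarrow> \<sigma> \<in> ind_complex V E \<and> card \<sigma> = d \<and> v \<in> \<sigma>}"

lemma finK: "finite (ind_complex V E)"
  using finV ind_sub[of V E] by (meson finite_Pow_iff finite_subset)

lemma spanP:
  fixes S :: "('a set \<Rightarrow> 'k::field) set"
  assumes "\<And>f x. f \<in> S \<Longrightarrow> f x \<noteq> 0 \<Longrightarrow> x \<subseteq> V"
  shows "S \<subseteq> fv.span (delta ` Pow V)"
  by (rule supp_set_in_span) (use finV assms in auto)

lemma chains_span: "(chains (ind_complex V' E) d :: ('a set \<Rightarrow> 'k::field) set) \<subseteq> fv.span (delta ` Pow V)"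
  if "V' \<subseteq> V" for V'
  by (rule spanP) (use that in \<open>force simp: chains_def ind_complex_def\<close>)

lemma bd_span: "boundary (ind_complex V' E) ` (S :: ('a set \<Rightarrow> 'k::field) set) \<subseteq> fv.span (delta ` Pow V)"
  if "V' \<subseteq> V" for V'
  by (rule spanP) (use that boundary_supp[OF ind_sub] in blast)

lemma pi_chains: "pi_v v ` (chains (ind_complex V E) d :: ('a set \<Rightarrow> 'k::field) set) = Bset d"
proof
  show "pi_v v ` (chains (ind_complex V E) d :: ('a set \<Rightarrow> 'k) set) \<subseteq> Bset d"
    by (auto simp: Bset_def pi_v_def chains_def split: if_splits)
  show "Bset d \<subseteq> pi_v v ` (chains (ind_complex V E) d :: ('a set \<Rightarrow> 'k) set)"
  proof
    fix g :: "'a set \<Rightarrow> 'k" assume g: "g \<in> Bset d"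
    then have "pi_v v g = g" by (auto simp: Bset_def pi_v_def fun_eq_iff)
    moreover have "g \<in> chains (ind_complex V E) d" using g by (auto simp: Bset_def chains_def)
    ultimately show "g \<in> pi_v v ` chains (ind_complex V E) d" by (metis image_eqI)
  qed
qed

lemma Bset_subspace: "fv.subspace (Bset d :: ('a set \<Rightarrow> 'k::field) set)"
  using fvp.linear_subspace_image[OF pi_linear chains_subspace] pi_chains by metis

lemma Bset_span: "(Bset d :: ('a set \<Rightarrow> 'k::field) set) \<subseteq> fv.span (delta ` Pow V)"
  by (rule spanP) (auto simp: Bset_def ind_complex_def)

lemma phi_inj:
  assumes h: "\<And>\<sigma>. (h :: 'a set \<Rightarrow> 'k::field) \<sigma> \<noteq> 0 \<Longrightarrow> v \<in> \<sigma>" and z: "phi_v v h = 0"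
  shows "h = 0"
proof -
  have "h \<sigma> = 0" for \<sigma>
  proof (rule ccontr)
    assume nz: "h \<sigma> \<noteq> 0"
    then have v: "v \<in> \<sigma>" by (rule h)
    have "phi_v v h (\<sigma> - {v}) = eps v (\<sigma> - {v}) * h \<sigma>"
      using v by (simp add: phi_v_def insert_absorb)
    then have "phi_v v h (\<sigma> - {v}) \<noteq> 0" using nz eps_nz by simp
    then show False using z by simp
  qed
  then show ?thesis by (simp add: fun_eq_iff)
qed

lemma phi_B: "phi_v v ` Bset (Suc d) = (chains (ind_complex (V - nb E v) E) d :: ('a set \<Rightarrow> 'k::field) set)"
proof
  show "phi_v v ` Bset (Suc d) \<subseteq> (chains (ind_complex (V - nb E v) E) d :: ('a set \<Rightarrow> 'k) set)"
  proof (rule subsetI, unfold chains_def mem_Collect_eq, elim imageE, intro allI impI)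
    fix g :: "'a set \<Rightarrow> 'k" and \<rho> x assume g: "g \<in> Bset (Suc d)" and x: "x = phi_v v g" and nz: "x \<rho> \<noteq> 0"
    from nz x have nz: "phi_v v g \<rho> \<noteq> 0" by simp
    then have v: "v \<notin> \<rho>" and gnz: "g (insert v \<rho>) \<noteq> 0" by (auto simp: phi_v_def split: if_splits)
    then have "insert v \<rho> \<in> ind_complex V E" "card (insert v \<rho>) = Suc d" using g by (auto simp: Bset_def)
    moreover have "finite \<rho>" using ind_fin[OF finV \<open>insert v \<rho> \<in> ind_complex V E\<close>] by simp
    ultimately show "\<rho> \<in> ind_complex (V - nb E v) E \<and> card \<rho> = d"
      using K2_char[OF vV noloop] v by auto
  qed
  show "(chains (ind_complex (V - nb E v) E) d :: ('a set \<Rightarrow> 'k) set) \<subseteq> phi_v v ` Bset (Suc d)"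
  proof
    fix h :: "'a set \<Rightarrow> 'k" assume h: "h \<in> chains (ind_complex (V - nb E v) E) d"
    define g where "g \<sigma> = (if v \<in> \<sigma> then eps v (\<sigma> - {v}) * h (\<sigma> - {v}) else 0)" for \<sigma>
    have "g \<in> Bset (Suc d)"
    proof (clarsimp simp: Bset_def)
      fix \<sigma> assume nz: "g \<sigma> \<noteq> 0"
      then have v: "v \<in> \<sigma>" and hnz: "h (\<sigma> - {v}) \<noteq> 0" by (auto simp: g_def split: if_splits)
      then have in2: "\<sigma> - {v} \<in> ind_complex (V - nb E v) E" and c: "card (\<sigma> - {v}) = d"
        using h by (auto simp: chains_def)
      then have "insert v (\<sigma> - {v}) \<in> ind_complex V E" using K2_char[OF vV noloop] by blast
      then have s: "\<sigma> \<in> ind_complex V E" using v by (simp add: insert_absorb)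
      have "finite \<sigma>" using ind_fin[OF finV s] .
      then have "card \<sigma> = Suc d" using c v by (metis card_Suc_Diff1)
      then show "\<sigma> \<in> ind_complex V E \<and> card \<sigma> = Suc d \<and> v \<in> \<sigma>" using s v by simp
    qed
    moreover have "phi_v v g = h"
    proof
      fix \<rho> show "phi_v v g \<rho> = h \<rho>"
      proof (cases "v \<in> \<rho>")
        case True
        then have "\<rho> \<notin> ind_complex (V - nb E v) E" using K2_char[OF vV noloop] by blast
        then show ?thesis using True h by (auto simp: phi_v_def chains_def)
      next
        case False
        then show ?thesis by (simp add: phi_v_def g_def mult.assoc[symmetric] eps_sq)
      qed
    qed
    ultimately show "h \<in> phi_v v ` Bset (Suc d)" by (metis image_eqI)
  qed
qed

lemma dimBSuc: "fv.dim (Bset (Suc d) :: ('a set \<Rightarrow> 'k::field) set) = cdim TYPE('k) (ind_complex (V - nb E v) E) d"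
proof -
  have "fv.dim (phi_v v ` (Bset (Suc d) :: ('a set \<Rightarrow> 'k::field) set)) = fv.dim (Bset (Suc d) :: ('a set \<Rightarrow> 'k::field) set)"
    by (rule fv_dim_inj[OF phi_linear Bset_subspace _ Bset_span])
       (use phi_inj finV in \<open>auto simp: Bset_def\<close>)
  then show ?thesis unfolding cdim_def phi_B by simp
qed

lemma Bset0: "(Bset 0 :: ('a set \<Rightarrow> 'k::field) set) = {0}"
proof -
  have "g \<sigma> = 0" if "g \<in> (Bset 0 :: ('a set \<Rightarrow> 'k::field) set)" for g \<sigma>
  proof (rule ccontr)
    assume "g \<sigma> \<noteq> 0"
    then have "\<sigma> \<in> ind_complex V E" "card \<sigma> = 0" "v \<in> \<sigma>" using that by (auto simp: Bset_def)
    then show False using ind_fin[OF finV] by fastforce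
  qed
  then have "g = 0" if "g \<in> (Bset 0 :: ('a set \<Rightarrow> 'k::field) set)" for g using that by (simp add: fun_eq_iff)
  then show ?thesis by (auto simp: Bset_def)
qed

lemma cdim_split:
  "cdim TYPE('k::field) (ind_complex V E) d = cdim TYPE('k) (ind_complex (V - {v}) E) d + fv.dim (Bset d :: ('a set \<Rightarrow> 'k) set)"
proof -
  have ker: "{f \<in> (chains (ind_complex V E) d :: ('a set \<Rightarrow> 'k) set). pi_v v f = 0} = chains (ind_complex (V - {v}) E) d"
    by (auto simp: chains_def pi_v_def K1_char fun_eq_iff; metis)
  have fin: "finite (delta ` Pow V)" using finV by simp
  have "fv.dim (chains (ind_complex V E) d :: ('a set \<Rightarrow> 'k) set) = fv.dim (pi_v v ` (chains (ind_complex V E) d :: ('a set \<Rightarrow> 'k) set))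
     + fv.dim {f \<in> (chains (ind_complex V E) d :: ('a set \<Rightarrow> 'k) set). pi_v v f = 0}"
    by (rule fv_rank_nullity[OF pi_linear chains_subspace fin chains_span[OF subset_refl]])
  then show ?thesis unfolding cdim_def ker pi_chains by simp
qed


lemma sign_lemma:
  fixes g :: "'a set \<Rightarrow> 'k::field"
  assumes g: "\<And>\<sigma>. g \<sigma> \<noteq> 0 \<Longrightarrow> \<sigma> \<in> ind_complex V E \<and> v \<in> \<sigma>"
  shows "phi_v v (pi_v v (boundary (ind_complex V E) g)) = boundary (ind_complex (V - nb E v) E) (phi_v v g)"
proof
  fix \<rho> :: "'a set"
  note K2 = K2_char[OF vV noloop]
  show "phi_v v (pi_v v (boundary (ind_complex V E) g)) \<rho> = boundary (ind_complex (V - nb E v) E) (phi_v v g) \<rho>"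
  proof (cases "v \<in> \<rho>")
    case True
    have emp: "{\<rho>' \<in> ind_complex (V - nb E v) E. \<rho> \<subseteq> \<rho>' \<and> card \<rho>' = card \<rho> + 1} = {}"
      using True K2 by blast
    show ?thesis using True unfolding boundary_def emp by (simp add: phi_v_def)
  next
    case False
    define L where "L = {\<sigma> \<in> ind_complex V E. insert v \<rho> \<subseteq> \<sigma> \<and> card \<sigma> = card (insert v \<rho>) + 1}"
    define R where "R = {\<rho>' \<in> ind_complex (V - nb E v) E. \<rho> \<subseteq> \<rho>' \<and> card \<rho>' = card \<rho> + 1}"
    have LHS: "phi_v v (pi_v v (boundary (ind_complex V E) g)) \<rho> =
        (\<Sum>\<sigma>\<in>L. eps v \<rho> * (bd_sign \<sigma> (insert v \<rho>) * g \<sigma>))"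
      using False by (simp add: phi_v_def pi_v_def boundary_def L_def sum_distrib_left)
    have RHS: "boundary (ind_complex (V - nb E v) E) (phi_v v g) \<rho> = (\<Sum>\<rho>'\<in>R. bd_sign \<rho>' \<rho> * phi_v v g \<rho>')"
      by (simp add: boundary_def R_def)
    have "(\<Sum>\<rho>'\<in>R. bd_sign \<rho>' \<rho> * phi_v v g \<rho>') = (\<Sum>\<sigma>\<in>L. eps v \<rho> * (bd_sign \<sigma> (insert v \<rho>) * g \<sigma>))"
    proof (rule sum.reindex_bij_witness[where i="\<lambda>\<sigma>. \<sigma> - {v}" and j="insert v"])
      fix a assume a: "a \<in> R"
      then have va: "v \<notin> a" and ia: "insert v a \<in> ind_complex V E" and ra: "\<rho> \<subseteq> a" and ca: "card a = card \<rho> + 1"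
        using K2 by (auto simp: R_def)
      have fa: "finite a" using ind_fin[OF finV ia] by simp
      have fr: "finite \<rho>" using fa ra finite_subset by blast
      show "insert v a - {v} = a" using va by simp
      show "insert v a \<in> L" using ia ra va fa fr ca False by (auto simp: L_def)
      obtain u where u: "a - \<rho> = {u}"
        using ca fa ra by (metis add_diff_cancel_left' card_1_singletonE card_Diff_subset fr plus_1_eq_Suc)
      then have au: "a = insert u \<rho>" "u \<notin> \<rho>" using ra by auto
      have uv: "u \<noteq> v" using au va by auto
      have "g (insert v a) * (eps v \<rho> * bd_sign (insert v (insert u \<rho>)) (insert v \<rho>)) =
            g (insert v a) * (bd_sign (insert u \<rho>) \<rho> * eps v (insert u \<rho>))"
        by (simp only: sign_identity[OF fr False au(2) uv, where 'k='k])
      then show "eps v \<rho> * (bd_sign (insert v a) (insert v \<rho>) * g (insert v a)) = bd_sign a \<rho> * phi_v v g a"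
        using va au(1) by (simp add: phi_v_def ac_simps)
    next
      fix b assume b: "b \<in> L"
      then have vb: "v \<in> b" and bK: "b \<in> ind_complex V E" and rb: "insert v \<rho> \<subseteq> b"
        and cb: "card b = card (insert v \<rho>) + 1" by (auto simp: L_def)
      have fb: "finite b" using ind_fin[OF finV bK] .
      have rb': "\<rho> \<subseteq> b" using rb by simp
      have fr: "finite \<rho>" using finite_subset[OF rb' fb] .
      show "insert v (b - {v}) = b" using vb by auto
      have "b - {v} \<in> ind_complex (V - nb E v) E" using K2[of "b - {v}"] vb bK by (simp add: insert_absorb)
      moreover have "card (b - {v}) = card \<rho> + 1" using cb fr fb vb False by (simp add: card_Diff_singleton)
      moreover have "\<rho> \<subseteq> b - {v}" using rb' False by blast
      ultimately show "b - {v} \<in> R" unfolding R_def by blast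
    qed
    then show ?thesis using LHS RHS by simp
  qed
qed


lemma finPV: "finite (delta ` Pow V)" using finV by simp

lemma bd_K1_pi: "pi_v v (boundary (ind_complex (V - {v}) E) (f :: 'a set \<Rightarrow> 'k::field)) = 0"
proof -
  have "boundary (ind_complex (V - {v}) E) f \<tau> = 0" if "v \<in> \<tau>" for \<tau>
  proof -
    have "{\<sigma> \<in> ind_complex (V - {v}) E. \<tau> \<subseteq> \<sigma> \<and> card \<sigma> = card \<tau> + 1} = {}"
      using that by (auto simp: ind_complex_def)
    then show ?thesis unfolding boundary_def by (simp only: sum.empty)
  qed
  then show ?thesis by (auto simp: pi_v_def fun_eq_iff)
qed

lemma chains_K1_sub: "chains (ind_complex (V - {v}) E) d \<subseteq> chains (ind_complex V E) d"
  by (auto simp: chains_def K1_char)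

lemma bd_K1: "f \<in> chains (ind_complex (V - {v}) E) d \<Longrightarrow> boundary (ind_complex V E) f = boundary (ind_complex (V - {v}) E) f"
  by (rule boundary_sub[OF finK]) (auto simp: K1_char chains_def)

lemma W_subspace: "fv.subspace (boundary K ` (chains K d :: ('a set \<Rightarrow> 'k::field) set))"
  by (rule fvp.linear_subspace_image[OF boundary_linear chains_subspace])

lemma rk_split:
  "rk TYPE('k::field) (ind_complex (V - {v}) E) d + fv.dim (pi_v v ` boundary (ind_complex V E) ` (chains (ind_complex V E) d :: ('a set \<Rightarrow> 'k) set))
    \<le> rk TYPE('k) (ind_complex V E) d"
proof -
  define W where "W = boundary (ind_complex V E) ` (chains (ind_complex V E) d :: ('a set \<Rightarrow> 'k) set)"
  have Wsp: "W \<subseteq> fv.span (delta ` Pow V)" unfolding W_def by (rule bd_span) simp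
  have rn: "fv.dim W = fv.dim (pi_v v ` W) + fv.dim {w \<in> W. pi_v v w = 0}"
    by (rule fv_rank_nullity[OF pi_linear _ finPV Wsp]) (simp add: W_def W_subspace)
  have sub: "boundary (ind_complex (V - {v}) E) ` (chains (ind_complex (V - {v}) E) d :: ('a set \<Rightarrow> 'k) set) \<subseteq> {w \<in> W. pi_v v w = 0}"
  proof
    fix w assume "w \<in> boundary (ind_complex (V - {v}) E) ` (chains (ind_complex (V - {v}) E) d :: ('a set \<Rightarrow> 'k) set)"
    then obtain f where f: "f \<in> (chains (ind_complex (V - {v}) E) d :: ('a set \<Rightarrow> 'k) set)" "w = boundary (ind_complex (V - {v}) E) f" by auto
    have "f \<in> (chains (ind_complex V E) d :: ('a set \<Rightarrow> 'k) set)" using f(1) chains_K1_sub by blast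
    then have "w \<in> W" unfolding W_def using f(2) bd_K1[OF f(1)] by (metis image_eqI)
    then show "w \<in> {w \<in> W. pi_v v w = 0}" using f(2) bd_K1_pi by simp
  qed
  have "rk TYPE('k) (ind_complex (V - {v}) E) d \<le> fv.dim {w \<in> W. pi_v v w = 0}"
    unfolding rk_def by (rule fv_dim_mono[OF sub finPV]) (use Wsp in auto)
  then show ?thesis using rn unfolding W_def rk_def by simp
qed

lemma pi_bd_pi:
  assumes f: "f \<in> (chains (ind_complex V E) d :: ('a set \<Rightarrow> 'k::field) set)"
  shows "pi_v v (boundary (ind_complex V E) f) = pi_v v (boundary (ind_complex V E) (pi_v v f))"
proof -
  have tf: "th_v v f \<in> chains (ind_complex (V - {v}) E) d"
    using f by (auto simp: chains_def th_v_def K1_char split: if_splits)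
  have "f = pi_v v f + th_v v f" by (auto simp: pi_v_def th_v_def fun_eq_iff)
  then have "boundary (ind_complex V E) f = boundary (ind_complex V E) (pi_v v f) + boundary (ind_complex V E) (th_v v f)"
    using fvp.linear_add[OF boundary_linear] by metis
  then have "pi_v v (boundary (ind_complex V E) f) = pi_v v (boundary (ind_complex V E) (pi_v v f)) + pi_v v (boundary (ind_complex V E) (th_v v f))"
    using fvp.linear_add[OF pi_linear] by metis
  also have "pi_v v (boundary (ind_complex V E) (th_v v f)) = 0" using bd_K1[OF tf] bd_K1_pi by simp
  finally show ?thesis by simp
qed

lemma pSuc:
  "fv.dim (pi_v v ` boundary (ind_complex V E) ` (chains (ind_complex V E) (Suc d) :: ('a set \<Rightarrow> 'k::field) set))
    = rk TYPE('k) (ind_complex (V - nb E v) E) d"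
proof -
  define P where "P = pi_v v ` boundary (ind_complex V E) ` (chains (ind_complex V E) (Suc d) :: ('a set \<Rightarrow> 'k) set)"
  have P1: "P = (\<lambda>g. pi_v v (boundary (ind_complex V E) g)) ` Bset (Suc d)"
  proof -
    have "P = (\<lambda>f. pi_v v (boundary (ind_complex V E) f)) ` (chains (ind_complex V E) (Suc d) :: ('a set \<Rightarrow> 'k) set)"
      unfolding P_def by auto
    also have "\<dots> = (\<lambda>f. pi_v v (boundary (ind_complex V E) (pi_v v f))) ` (chains (ind_complex V E) (Suc d) :: ('a set \<Rightarrow> 'k) set)"
      by (rule image_cong[OF refl pi_bd_pi])
    also have "\<dots> = (\<lambda>g. pi_v v (boundary (ind_complex V E) g)) ` (pi_v v ` (chains (ind_complex V E) (Suc d) :: ('a set \<Rightarrow> 'k) set))"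
      by (simp add: image_image)
    finally show ?thesis unfolding pi_chains .
  qed
  have P2: "phi_v v ` P = boundary (ind_complex (V - nb E v) E) ` (chains (ind_complex (V - nb E v) E) d :: ('a set \<Rightarrow> 'k) set)"
  proof -
    have "phi_v v ` P = (\<lambda>g. phi_v v (pi_v v (boundary (ind_complex V E) g))) ` Bset (Suc d)"
      unfolding P1 by (simp add: image_image)
    also have "\<dots> = (\<lambda>g. boundary (ind_complex (V - nb E v) E) (phi_v v g)) ` Bset (Suc d)"
      by (rule image_cong[OF refl sign_lemma]) (auto simp: Bset_def)
    also have "\<dots> = boundary (ind_complex (V - nb E v) E) ` (phi_v v ` Bset (Suc d))"
      by (simp add: image_image)
    finally show ?thesis unfolding phi_B .
  qed
  have Psub: "fv.subspace P" unfolding P_def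
    by (rule fvp.linear_subspace_image[OF pi_linear W_subspace])
  have Psp: "P \<subseteq> fv.span (delta ` Pow V)"
  proof (rule spanP)
    fix h x assume "h \<in> P" "h x \<noteq> 0"
    then obtain f where "h = pi_v v (boundary (ind_complex V E) f)" "boundary (ind_complex V E) f x \<noteq> 0"
      unfolding P_def by (auto simp: pi_v_def split: if_splits)
    then show "x \<subseteq> V" using boundary_supp[OF ind_sub] by blast
  qed
  have "fv.dim (phi_v v ` P) = fv.dim P"
  proof (rule fv_dim_inj[OF phi_linear Psub finPV Psp])
    fix h assume h: "h \<in> P" "phi_v v h = 0"
    have "\<And>\<sigma>. h \<sigma> \<noteq> 0 \<Longrightarrow> v \<in> \<sigma>" using h(1) unfolding P_def by (auto simp: pi_v_def split: if_splits)
    then show "h = 0" using phi_inj h(2) by blast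
  qed
  then have "fv.dim P = rk TYPE('k) (ind_complex (V - nb E v) E) d" unfolding rk_def P2 by simp
  then show ?thesis unfolding P_def .
qed

lemma cone_rk: "fv.dim (Bset d :: ('a set \<Rightarrow> 'k::field) set) \<le> rk TYPE('k) (ind_complex V E) d"
proof -
  define T where "T = (\<lambda>g. th_v v (boundary (ind_complex V E) (g :: 'a set \<Rightarrow> 'k)))"
  have "T = th_v v \<circ> boundary (ind_complex V E)" by (auto simp: T_def)
  then have linT: "Vector_Spaces.linear sc sc T"
    using Vector_Spaces.linear_compose[OF boundary_linear th_linear] by metis
  have inj: "g = 0" if g: "g \<in> Bset d" and Tg: "T g = 0" for g
  proof -
    have "g \<sigma> = 0" for \<sigma>
    proof (rule ccontr)
      assume nz: "g \<sigma> \<noteq> 0"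
      then have sK: "\<sigma> \<in> ind_complex V E" and vs: "v \<in> \<sigma>" and cs: "card \<sigma> = d" using g by (auto simp: Bset_def)
      have fs: "finite \<sigma>" using ind_fin[OF finV sK] .
      define \<tau> where "\<tau> = \<sigma> - {v}"
      have vt: "v \<notin> \<tau>" by (simp add: \<tau>_def)
      define L where "L = {\<sigma>' \<in> ind_complex V E. \<tau> \<subseteq> \<sigma>' \<and> card \<sigma>' = card \<tau> + 1}"
      have "card \<sigma> > 0" using fs vs card_gt_0_iff by blast
      then have cst: "card \<sigma> = card \<tau> + 1" using fs vs by (simp add: \<tau>_def card_Diff_singleton)
      have sL: "\<sigma> \<in> L" using sK cst by (auto simp: L_def \<tau>_def)
      have finL: "finite L" using finK by (simp add: L_def)
      have "T g \<tau> = (\<Sum>\<sigma>'\<in>L. bd_sign \<sigma>' \<tau> * g \<sigma>')"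
        using vt by (simp add: T_def th_v_def boundary_def L_def)
      also have "\<dots> = bd_sign \<sigma> \<tau> * g \<sigma>"
      proof -
       have "(\<Sum>\<sigma>'\<in>L - {\<sigma>}. bd_sign \<sigma>' \<tau> * g \<sigma>') = 0"
       proof (rule sum.neutral, rule ballI)
        fix \<sigma>' assume s'': "\<sigma>' \<in> L - {\<sigma>}"
        then have s': "\<sigma>' \<in> L" "\<sigma>' \<noteq> \<sigma>" by auto
        show "bd_sign \<sigma>' \<tau> * g \<sigma>' = 0"
        proof (rule ccontr)
          assume "bd_sign \<sigma>' \<tau> * g \<sigma>' \<noteq> 0"
          then have "g \<sigma>' \<noteq> 0" by auto
          then have v': "v \<in> \<sigma>'" and s'K: "\<sigma>' \<in> ind_complex V E" using g by (auto simp: Bset_def)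
          have fs': "finite \<sigma>'" using ind_fin[OF finV s'K] .
          have sub: "\<sigma> \<subseteq> \<sigma>'" using s'(1) v' vs by (auto simp: L_def \<tau>_def)
          have cc: "card \<sigma> = card \<sigma>'" using s'(1) cst by (simp add: L_def)
          have "\<sigma> = \<sigma>'" using card_subset_eq[OF fs' sub cc] .
          then show False using s'(2) by simp
        qed
       qed
       then show ?thesis using sum.remove[OF finL sL, of "\<lambda>\<sigma>'. bd_sign \<sigma>' \<tau> * g \<sigma>'"] by simp
      qed
      finally have "T g \<tau> \<noteq> 0" using nz bd_sign_nz by simp
      then show False using Tg by simp
    qed
    then show ?thesis by (simp add: fun_eq_iff)
  qed
  have Bsub: "Bset d \<subseteq> (chains (ind_complex V E) d :: ('a set \<Rightarrow> 'k) set)"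
    by (auto simp: Bset_def chains_def)
  have "fv.dim (Bset d :: ('a set \<Rightarrow> 'k) set) = fv.dim (T ` Bset d)"
    by (rule fv_dim_inj[OF linT Bset_subspace finPV Bset_span, symmetric]) (use inj in auto)
  also have "\<dots> \<le> fv.dim (T ` (chains (ind_complex V E) d :: ('a set \<Rightarrow> 'k) set))"
  proof (rule fv_dim_mono[OF image_mono[OF Bsub] finPV])
    show "T ` chains (ind_complex V E) d \<subseteq> fv.span (delta ` Pow V)"
    proof (rule spanP)
      fix h x assume "h \<in> T ` (chains (ind_complex V E) d :: ('a set \<Rightarrow> 'k) set)" "h x \<noteq> 0"
      then have "\<exists>f :: 'a set \<Rightarrow> 'k. boundary (ind_complex V E) f x \<noteq> 0"
        by (auto simp: T_def th_v_def split: if_splits)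
      then obtain f :: "'a set \<Rightarrow> 'k" where "boundary (ind_complex V E) f x \<noteq> 0" by blast
      then show "x \<subseteq> V" using boundary_supp[OF ind_sub] by blast
    qed
  qed
  also have "T ` (chains (ind_complex V E) d :: ('a set \<Rightarrow> 'k) set) = th_v v ` boundary (ind_complex V E) ` chains (ind_complex V E) d"
    by (auto simp: T_def)
  also have "fv.dim \<dots> \<le> rk TYPE('k) (ind_complex V E) d"
    unfolding rk_def
    by (rule fv_dim_image_le[OF th_linear W_subspace finPV bd_span]) simp
  finally show ?thesis .
qed

end

definition beta :: "'k::field itself \<Rightarrow> 'a::linorder set set \<Rightarrow> nat \<Rightarrow> nat" where
  "beta k K d = (cdim k K d - rk k K d) - rk k K (Suc d)"

lemma chains_zero_big:
  assumes "finite V" "card V < d"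
  shows "(chains (ind_complex V E) d :: ('a set \<Rightarrow> 'k::field) set) = {0}"
proof -
  have "f \<sigma> = 0" if "f \<in> (chains (ind_complex V E) d :: ('a set \<Rightarrow> 'k::field) set)" for f \<sigma>
  proof (rule ccontr)
    assume "f \<sigma> \<noteq> 0"
    then have "\<sigma> \<subseteq> V" "card \<sigma> = d" using that by (auto simp: chains_def ind_complex_def)
    then show False using card_mono[OF assms(1), of \<sigma>] assms(2) by simp
  qed
  then show ?thesis using chains_subspace[of "ind_complex V E" d] fv.subspace_0
    by (auto simp: fun_eq_iff)
qed

lemma beta_big: "finite V \<Longrightarrow> card V < d \<Longrightarrow> beta TYPE('k::field) (ind_complex V E) d = 0"
  unfolding beta_def cdim_def using chains_zero_big[of V d E, where 'k='k] fv_dim_zero[where 'k='k and 'b="'a set"] by simp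

lemma btilde_ext:
  assumes "finite V" "card V \<le> N"
  shows "btilde TYPE('k::field) V E = (\<Sum>d\<le>N. beta TYPE('k) (ind_complex V E) d)"
proof -
  have "btilde TYPE('k::field) V E = (\<Sum>d\<le>card V. beta TYPE('k) (ind_complex V E) d)"
    unfolding btilde_def total_reduced_betti_def beta_def
    using betti_formula[OF assms(1) ind_sub, where 'k='k] by simp
  also have "\<dots> = (\<Sum>d\<le>N. beta TYPE('k) (ind_complex V E) d)"
  proof (rule sum.mono_neutral_left)
    show "\<forall>i\<in>{..N} - {..card V}. beta TYPE('k) (ind_complex V E) i = 0"
      using assms(1) beta_big[of V _ E, where 'k='k] by auto
  qed (use assms in auto)
  finally show ?thesis .
qed

lemma nat_ineq:
  fixes a b c r r' r1 r1' p p' :: nat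
  assumes "c = a + b" "r1 + p \<le> r" "r1' + p' \<le> r'"
  shows "(c - r) - r' \<le> ((a - r1) - r1') + ((b - p) - p')"
  using assms by linarith

lemma nat_cone:
  fixes a b c r r' :: nat
  assumes "c = a + b" "b \<le> r" "a \<le> r'"
  shows "(c - r) - r' = 0"
  using assms by linarith

context
  fixes V :: "'a::linorder set" and E :: "'a set set" and v :: 'a
  assumes finV: "finite V" and vV: "v \<in> V" and noloop: "\<forall>u. {u} \<notin> E"
begin

lemma beta_split:
  "beta TYPE('k::field) (ind_complex V E) d \<le> beta TYPE('k) (ind_complex (V - {v}) E) d
     + (case d of 0 \<Rightarrow> 0 | Suc e \<Rightarrow> beta TYPE('k) (ind_complex (V - nb E v) E) e)"
proof (cases d)
  case 0
  note c = cdim_split[OF finV vV noloop, where 'k='k, of 0]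
  note r = rk_split[OF finV vV noloop, where 'k='k, of 0]
  note r' = rk_split[OF finV vV noloop, where 'k='k, of "Suc 0"]
  note p' = pSuc[OF finV vV noloop, where 'k='k, of 0]
  have "fv.dim (Bset V E v 0 :: ('a set \<Rightarrow> 'k) set) = 0" unfolding Bset0[OF finV vV noloop] by (rule fv_dim_zero)
  then have "beta TYPE('k) (ind_complex V E) 0 \<le> beta TYPE('k) (ind_complex (V - {v}) E) 0 + 0"
    using nat_ineq[OF c r r'[unfolded p']] unfolding beta_def by simp
  then show ?thesis using 0 by simp
next
  case (Suc e)
  note c = cdim_split[OF finV vV noloop, where 'k='k, of "Suc e", unfolded dimBSuc[OF finV vV noloop]]
  note r = rk_split[OF finV vV noloop, where 'k='k, of "Suc e", unfolded pSuc[OF finV vV noloop]]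
  note r' = rk_split[OF finV vV noloop, where 'k='k, of "Suc (Suc e)", unfolded pSuc[OF finV vV noloop]]
  have "beta TYPE('k) (ind_complex V E) (Suc e) \<le> beta TYPE('k) (ind_complex (V - {v}) E) (Suc e)
     + beta TYPE('k) (ind_complex (V - nb E v) E) e"
    unfolding beta_def by (rule nat_ineq[OF c r r'])
  then show ?thesis using Suc by simp
qed

lemma beta_cone:
  assumes iso: "\<forall>u\<in>V. {u, v} \<notin> E"
  shows "beta TYPE('k::field) (ind_complex V E) d = 0"
proof -
  have eq: "V - nb E v = V - {v}" using iso by (auto simp: nb_def)
  note c = cdim_split[OF finV vV noloop, where 'k='k, of d]
  note r = cone_rk[OF finV vV noloop, where 'k='k, of d]
  note r' = cone_rk[OF finV vV noloop, where 'k='k, of "Suc d"]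
  note b = dimBSuc[OF finV vV noloop, where 'k='k, of d]
  show ?thesis using nat_cone[OF c r r'[unfolded b[unfolded eq]]] unfolding beta_def by simp
qed

lemma btilde_split:
  "btilde TYPE('k::field) V E \<le> btilde TYPE('k) (V - {v}) E + btilde TYPE('k) (V - nb E v) E"
proof -
  define m where "m = card (V - {v})"
  have m: "card V = Suc m" unfolding m_def using card_Suc_Diff1[OF finV vV] by simp
  have c1: "card (V - {v}) \<le> Suc m" using m finV vV by (simp add: card_Diff_singleton)
  have "card (V - nb E v) \<le> card (V - {v})" using finV by (intro card_mono) (auto simp: nb_def)
  then have c2: "card (V - nb E v) \<le> m" using m finV vV by (simp add: card_Diff_singleton)
  have "btilde TYPE('k) V E = (\<Sum>d\<le>Suc m. beta TYPE('k) (ind_complex V E) d)"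
    using btilde_ext[OF finV, where 'k='k, of "Suc m" E] m by simp
  also have "\<dots> \<le> (\<Sum>d\<le>Suc m. beta TYPE('k) (ind_complex (V - {v}) E) d
     + (case d of 0 \<Rightarrow> 0 | Suc e \<Rightarrow> beta TYPE('k) (ind_complex (V - nb E v) E) e))"
    by (rule sum_mono) (rule beta_split)
  also have "\<dots> = (\<Sum>d\<le>Suc m. beta TYPE('k) (ind_complex (V - {v}) E) d)
     + (\<Sum>d\<le>Suc m. (case d of 0 \<Rightarrow> 0 | Suc e \<Rightarrow> beta TYPE('k) (ind_complex (V - nb E v) E) e))"
    by (rule sum.distrib)
  also have "(\<Sum>d\<le>Suc m. (case d of 0 \<Rightarrow> 0 | Suc e \<Rightarrow> beta TYPE('k) (ind_complex (V - nb E v) E) e))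
     = (\<Sum>e\<le>m. beta TYPE('k) (ind_complex (V - nb E v) E) e)"
    by (subst sum.atMost_Suc_shift) simp
  also have "(\<Sum>e\<le>m. beta TYPE('k) (ind_complex (V - nb E v) E) e) = btilde TYPE('k) (V - nb E v) E"
    using btilde_ext[of "V - nb E v" m, where 'k='k] finV c2 by simp
  also have "(\<Sum>d\<le>Suc m. beta TYPE('k) (ind_complex (V - {v}) E) d) = btilde TYPE('k) (V - {v}) E"
    using btilde_ext[of "V - {v}" "Suc m", where 'k='k] finV c1 by simp
  finally show ?thesis .
qed

lemma btilde_cone:
  assumes iso: "\<forall>u\<in>V. {u, v} \<notin> E"
  shows "btilde TYPE('k::field) V E = 0"
  using btilde_ext[OF finV le_refl, where 'k='k] beta_cone[OF iso, where 'k='k] by simp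

end

lemma qrt4: "((3::real) powr (1/4))^4 = 3"
  by (simp add: powr_power)

lemma three_qrt_ge: "1.3 \<le> (3::real) powr (1/4)"
proof -
  have n1: "(1.3::real)^4 \<le> 3" by (simp add: eval_nat_numeral)
  show ?thesis using power_le_imp_le_base[of "1.3::real" 3 "3 powr (1/4)"] n1 qrt4 by simp
qed

lemma powr_split: "(3::real) powr (a + b) = 3 powr a * 3 powr b" by (rule powr_add)

lemma d_le_aux: "d \<ge> 5 \<Longrightarrow> real d \<le> 3 powr ((real d + 1) / 4)"
proof (induction d rule: dec_induct[where i=5])
  case base
  have "((3::real) powr ((real 5 + 1)/4))^2 = 3 powr (of_nat 2 * ((real 5 + 1)/4))"
    by (rule powr_power) simp
  also have "\<dots> = 3 powr (real 3)" by simp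
  also have "\<dots> = 27" by (subst powr_realpow) auto
  finally have sq: "((3::real) powr ((real 5 + 1)/4))^2 = 27" .
  define x where "x = (3::real) powr ((real 5 + 1)/4)"
  have x0: "0 \<le> x" by (simp add: x_def)
  have "x ^ Suc 1 = 27" using sq unfolding x_def[symmetric] by (simp add: numeral_2_eq_2)
  moreover have "real 5 ^ Suc 1 = 25" by simp
  ultimately have "real 5 ^ Suc 1 \<le> x ^ Suc 1" by simp
  from power_le_imp_le_base[OF this x0] show ?case unfolding x_def .
next
  case (step n)
  have e: "(real (Suc n) + 1)/4 = (real n + 1)/4 + 1/4" by (simp add: field_simps)
  have "(3::real) powr ((real (Suc n) + 1)/4) = 3 powr ((real n + 1)/4) * 3 powr (1/4)"
    unfolding e by (rule powr_add)
  also have "\<dots> \<ge> real n * 1.3"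
    using step.IH three_qrt_ge by (intro mult_mono) auto
  finally show ?case using step.hyps by simp
qed

lemma d_le: "1 \<le> d \<Longrightarrow> d \<noteq> 4 \<Longrightarrow> real d \<le> 3 powr ((real d + 1) / 4)"
proof -
  assume d: "1 \<le> d" "d \<noteq> 4"
  consider "d = 1" | "d = 2" | "d = 3" | "d \<ge> 5" using d by linarith
  then show ?thesis
  proof cases
    case 1
    have "(1::real) \<le> 3 powr ((1 + 1)/4)" by (rule ge_one_powr_ge_zero) auto
    then show ?thesis using 1 by simp
  next
    case 2
    have "((3::real) powr ((2 + 1)/4))^4 = 3 powr (of_nat 4 * ((2 + 1)/4))"
      by (rule powr_power) simp
    also have "\<dots> = 3 powr (real 3)" by simp
    also have "\<dots> = 27" by (subst powr_realpow) auto
    finally have sq: "((3::real) powr ((2 + 1)/4))^4 = 27" .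
    have "(2::real) \<le> 3 powr ((2 + 1)/4)"
      using power_le_imp_le_base[of "2::real" 3 "3 powr ((2 + 1)/4)"] sq by simp
    then show ?thesis using 2 by simp
  next
    case 3
    then show ?thesis by simp
  next
    case 4
    then show ?thesis by (rule d_le_aux)
  qed
qed

lemma gen_ineq:
  fixes n :: real
  assumes "1 \<le> d" "d \<noteq> 4"
  shows "real d * 3 powr ((n - real d - 1) / 4) \<le> 3 powr (n / 4)"
proof -
  have e: "n / 4 = (n - real d - 1) / 4 + (real d + 1) / 4" by (simp add: field_simps)
  have "3 powr (n / 4) = 3 powr ((n - real d - 1) / 4) * 3 powr ((real d + 1) / 4)"
    unfolding e by (rule powr_add)
  moreover have "real d * 3 powr ((n - real d - 1) / 4) \<le> 3 powr ((real d + 1) / 4) * 3 powr ((n - real d - 1) / 4)"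
    by (rule mult_right_mono[OF d_le[OF assms]]) simp
  ultimately show ?thesis by (simp add: mult.commute)
qed

lemma four_ineq:
  fixes n :: real
  shows "3 * 3 powr ((n - 5) / 4) + 3 powr ((n - 6) / 4) \<le> 3 powr (n / 4)"
proof -
  define q where "q = (3::real) powr ((n - 6) / 4)"
  define t where "t = (3::real) powr (1/4)"
  have q0: "q \<ge> 0" by (simp add: q_def)
  have t13: "1.3 \<le> t" using three_qrt_ge by (simp add: t_def)
  have e1: "(n - 5) / 4 = (n - 6) / 4 + 1/4" by (simp add: field_simps)
  have a: "3 powr ((n - 5) / 4) = q * t" unfolding e1 q_def t_def by (rule powr_add)
  have e2: "n / 4 = (n - 6) / 4 + 6/4" by (simp add: field_simps)
  have t6: "t ^ 6 = 3 powr (6/4)" unfolding t_def by (subst powr_power) auto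
  have t64: "t ^ 6 = 3 * t^2"
  proof -
    have "t ^ 6 = t^4 * t^2" by (simp add: power_add[symmetric])
    then show ?thesis using qrt4 by (simp add: t_def)
  qed
  have b: "(3::real) powr (n / 4) = q * (3 * t^2)"
    unfolding e2 powr_add q_def t64[symmetric] t6 by simp
  have poly: "3 * t + 1 \<le> 3 * t^2"
  proof -
    have "0 \<le> (t - 1.3) * (3 * t + 0.9)" using t13 by (intro mult_nonneg_nonneg) auto
    then show ?thesis by (simp add: algebra_simps power2_eq_square)
  qed
  have "q * (3 * t + 1) \<le> q * (3 * t^2)" by (rule mult_left_mono[OF poly q0])
  then show ?thesis unfolding a b q_def[symmetric] by (simp add: algebra_simps)
qed

definition nbh :: "'a set \<Rightarrow> 'a set set \<Rightarrow> 'a \<Rightarrow> 'a set" where "nbh V E w = {u\<in>V. {u, w} \<in> E}"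

lemma btilde_iter:
  fixes V :: "'a::linorder set"
  assumes "finite V" "\<forall>u. {u} \<notin> E" "distinct ws" "set ws \<subseteq> V"
  shows "btilde TYPE('k::field) V E \<le> (\<Sum>i<length ws. btilde TYPE('k) (V - set (take i ws) - nb E (ws!i)) E)
     + btilde TYPE('k) (V - set ws) E"
  using assms
proof (induction ws arbitrary: V)
  case Nil
  then show ?case by simp
next
  case (Cons w rest)
  have wV: "w \<in> V" using Cons.prems(4) by simp
  have p1: "finite (V - {w})" using Cons.prems(1) by simp
  have p3: "distinct rest" using Cons.prems(3) by simp
  have p4: "set rest \<subseteq> V - {w}" using Cons.prems(3,4) by auto
  have IH: "btilde TYPE('k) (V - {w}) E \<le> (\<Sum>i<length rest. btilde TYPE('k) (V - {w} - set (take i rest) - nb E (rest!i)) E)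
     + btilde TYPE('k) (V - {w} - set rest) E"
    by (rule Cons.IH[OF p1 Cons.prems(2) p3 p4])
  have split: "btilde TYPE('k) V E \<le> btilde TYPE('k) (V - {w}) E + btilde TYPE('k) (V - nb E w) E"
    using btilde_split[OF Cons.prems(1) wV Cons.prems(2)] .
  define g where "g i = btilde TYPE('k) (V - set (take i (w#rest)) - nb E ((w#rest)!i)) E" for i
  have "(\<Sum>i<length (w#rest). g i) = g 0 + (\<Sum>i<length rest. g (Suc i))"
    by (simp only: length_Cons sum.lessThan_Suc_shift)
  moreover have "g 0 = btilde TYPE('k) (V - nb E w) E" by (simp add: g_def)
  moreover have "g (Suc i) = btilde TYPE('k) (V - {w} - set (take i rest) - nb E (rest!i)) E" for i
  proof -
    have "V - set (take (Suc i) (w#rest)) - nb E ((w#rest)!(Suc i)) = V - {w} - set (take i rest) - nb E (rest!i)"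
      by auto
    then show ?thesis by (simp only: g_def)
  qed
  ultimately have eq1: "(\<Sum>i<length (w#rest). btilde TYPE('k) (V - set (take i (w#rest)) - nb E ((w#rest)!i)) E)
     = btilde TYPE('k) (V - nb E w) E + (\<Sum>i<length rest. btilde TYPE('k) (V - {w} - set (take i rest) - nb E (rest!i)) E)"
    unfolding g_def by simp
  have eq2: "V - set (w#rest) = V - {w} - set rest" by auto
  show ?case using split IH unfolding eq1 eq2 by simp
qed

lemma no_clique_mono: "V' \<subseteq> V \<Longrightarrow> \<not> has_clique V E r \<Longrightarrow> \<not> has_clique V' E r"
  by (auto simp: has_clique_def)

lemma btilde_empty: "btilde TYPE('k::field) ({} :: 'a::linorder set) E \<le> 1"
proof -
  have sp: "(chains (ind_complex ({} :: 'a set) E) 0 :: ('a set \<Rightarrow> 'k) set) \<subseteq> fv.span (delta ` Pow {})"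
    by (rule supp_set_in_span) (auto simp: chains_def ind_complex_def)
  have "cdim TYPE('k) (ind_complex ({} :: 'a set) E) 0 \<le> card (delta ` Pow ({} :: 'a set) :: ('a set \<Rightarrow> 'k) set)"
    unfolding cdim_def by (rule fv.dim_le_card[OF sp]) simp
  also have "\<dots> \<le> 1" by simp
  finally have c: "cdim TYPE('k) (ind_complex ({} :: 'a set) E) 0 \<le> 1" .
  have "btilde TYPE('k) ({} :: 'a set) E = reduced_betti TYPE('k) (ind_complex ({} :: 'a set) E) 0"
    by (simp add: btilde_def total_reduced_betti_def)
  also have "\<dots> \<le> cdim TYPE('k) (ind_complex ({} :: 'a set) E) 0"
    using betti_formula[of "{} :: 'a set" "ind_complex {} E" 0, where 'k='k] ind_sub[of "{} :: 'a set" E] by simp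
  finally show ?thesis using c by simp
qed

lemma powr3_mono: "a \<le> b \<Longrightarrow> (3::real) powr a \<le> 3 powr b"
  by (rule powr_mono) auto

theorem main_bound:
  fixes V :: "'a::linorder set"
  assumes "finite V" "\<forall>u. {u} \<notin> E" "\<not> has_clique V E 5"
  shows "real (btilde TYPE('k::field) V E) \<le> 3 powr (real (card V) / 4)"
  using assms
proof (induction "card V" arbitrary: V rule: less_induct)
  case less
  note fin = less.prems(1) and noloop = less.prems(2) and ncl = less.prems(3)
  show ?case
  proof (cases "V = {}")
    case True
    have "btilde TYPE('k) V E \<le> 1" using True btilde_empty by simp
    then show ?thesis using True by simp
  next
    case False
    define deg where "deg w = card (nbh V E w)" for w
    have Nsub: "nbh V E w \<subseteq> V" for w by (auto simp: nbh_def)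
    have finN: "finite (nbh V E w)" for w using finite_subset[OF Nsub fin] .
    have wnotin: "w \<notin> nbh V E w" for w using noloop by (auto simp: nbh_def)
    have Nnb: "nbh V E w \<subseteq> nb E w" for w by (auto simp: nbh_def nb_def)
    obtain v where vV: "v \<in> V" and vmin: "\<And>w. w \<in> V \<Longrightarrow> deg v \<le> deg w"
    proof -
      have "Min (deg ` V) \<in> deg ` V" using fin False by simp
      then obtain v where "v \<in> V" "deg v = Min (deg ` V)" by auto
      moreover have "\<And>w. w \<in> V \<Longrightarrow> Min (deg ` V) \<le> deg w" using fin by simp
      ultimately show ?thesis using that by metis
    qed
    define d where "d = deg v"
    show ?thesis
    proof (cases "d = 0")
      case True
      then have "nbh V E v = {}" using finN by (simp add: d_def deg_def)
      then have "\<forall>u\<in>V. {u, v} \<notin> E" by (auto simp: nbh_def)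
      then have "btilde TYPE('k) V E = 0" by (rule btilde_cone[OF fin vV noloop])
      then show ?thesis by simp
    next
      case False
      then have d1: "1 \<le> d" by simp
      obtain ws where ws: "distinct ws" "set ws = nbh V E v" and ws4: "d = 4 \<Longrightarrow> {ws!0, ws!1} \<notin> E \<and> ws!0 \<noteq> ws!1"
      proof (cases "d = 4")
        case True
        have "\<exists>a\<in>nbh V E v. \<exists>b\<in>nbh V E v. a \<noteq> b \<and> {a, b} \<notin> E"
        proof (rule ccontr)
          assume "\<not> ?thesis"
          then have all: "\<forall>a\<in>nbh V E v. \<forall>b\<in>nbh V E v. a \<noteq> b \<longrightarrow> {a, b} \<in> E" by blast
          have "has_clique V E 5"
            unfolding has_clique_def
          proof (intro exI conjI)
            show "insert v (nbh V E v) \<subseteq> V" using vV Nsub by auto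
            show "card (insert v (nbh V E v)) = 5"
              using True finN wnotin by (simp add: d_def deg_def)
            show "\<forall>u\<in>insert v (nbh V E v). \<forall>w\<in>insert v (nbh V E v). u \<noteq> w \<longrightarrow> {u, w} \<in> E"
              using all by (auto simp: nbh_def insert_commute)
          qed
          then show False using ncl by simp
        qed
        then obtain a b where ab: "a \<in> nbh V E v" "b \<in> nbh V E v" "a \<noteq> b" "{a, b} \<notin> E" by blast
        obtain rest where rest: "distinct rest" "set rest = nbh V E v - {a, b}"
          using finite_distinct_list[of "nbh V E v - {a, b}"] finN by auto
        have "distinct (a # b # rest)" using rest ab by auto
        moreover have "set (a # b # rest) = nbh V E v" using rest ab by auto
        moreover have "{(a # b # rest)!0, (a # b # rest)!1} \<notin> E \<and> (a # b # rest)!0 \<noteq> (a # b # rest)!1"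
          using ab by simp
        ultimately show ?thesis using that by blast
      next
        case False
        obtain ws where "distinct ws" "set ws = nbh V E v"
          using finite_distinct_list[of "nbh V E v"] finN by auto
        then show ?thesis using that False by blast
      qed
      have len: "length ws = d" using distinct_card[OF ws(1)] ws(2) by (simp add: d_def deg_def)
      have wsV: "set ws \<subseteq> V" using ws(2) Nsub by simp
      define V' where "V' i = V - set (take i ws) - nb E (ws!i)" for i
      have iter: "btilde TYPE('k) V E \<le> (\<Sum>i<d. btilde TYPE('k) (V' i) E) + btilde TYPE('k) (V - set ws) E"
        using btilde_iter[OF fin noloop ws(1) wsV, where 'k='k] unfolding len V'_def .
      have cone0: "btilde TYPE('k) (V - set ws) E = 0"
      proof (rule btilde_cone)
        show "finite (V - set ws)" using fin by simp
        show "v \<in> V - set ws" using vV wnotin ws(2) by simp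
        show "\<forall>u. {u} \<notin> E" by (rule noloop)
        show "\<forall>u\<in>V - set ws. {u, v} \<notin> E" using ws(2) by (auto simp: nbh_def)
      qed
      have wiV: "ws!i \<in> V" if "i < d" for i using that len wsV nth_mem by fastforce
      have ih: "real (btilde TYPE('k) (V' i) E) \<le> 3 powr (real (card (V' i)) / 4)" if i: "i < d" for i
      proof (rule less.hyps)
        have "ws!i \<notin> V' i" by (simp add: V'_def nb_def)
        moreover have "V' i \<subseteq> V" by (auto simp: V'_def)
        ultimately have "V' i \<subset> V" using wiV[OF i] by blast
        then show "card (V' i) < card V" by (rule psubset_card_mono[OF fin])
        show "finite (V' i)" using fin by (simp add: V'_def)
        show "\<forall>u. {u} \<notin> E" by (rule noloop)
        show "\<not> has_clique (V' i) E 5" by (rule no_clique_mono[OF _ ncl]) (auto simp: V'_def)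
      qed
      have cardb: "real (card (V' i)) \<le> real (card V) - real d - 1" if i: "i < d" for i
      proof -
        define w where "w = ws!i"
        have wV: "w \<in> V" using wiV[OF i] by (simp add: w_def)
        have sub: "V' i \<subseteq> V - insert w (nbh V E w)" using Nnb by (auto simp: V'_def w_def nb_def)
        have B: "insert w (nbh V E w) \<subseteq> V" using wV Nsub by auto
        have cB: "card (insert w (nbh V E w)) = deg w + 1" using finN wnotin by (simp add: deg_def)
        have dw: "d \<le> deg w" using vmin[OF wV] by (simp add: d_def)
        have "card (V' i) \<le> card (V - insert w (nbh V E w))" using card_mono[OF _ sub] fin by simp
        also have "\<dots> = card V - card (insert w (nbh V E w))" using card_Diff_subset[OF _ B] finite_subset[OF B fin] by simp
        finally have "card (V' i) \<le> card V - (deg w + 1)" using cB by simp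
        moreover have "deg w + 1 \<le> card V" using card_mono[OF fin B] cB by simp
        ultimately show ?thesis using dw by linarith
      qed
      have terms: "real (btilde TYPE('k) (V' i) E) \<le> 3 powr ((real (card V) - real d - 1) / 4)" if i: "i < d" for i
      proof -
        have "real (card (V' i)) / 4 \<le> (real (card V) - real d - 1) / 4" using cardb[OF i] by simp
        from powr3_mono[OF this] ih[OF i] show ?thesis by linarith
      qed
      have nat_le: "btilde TYPE('k) V E \<le> (\<Sum>i<d. btilde TYPE('k) (V' i) E)"
        using iter unfolding cone0 by simp
      have "real (btilde TYPE('k) V E) \<le> real (\<Sum>i<d. btilde TYPE('k) (V' i) E)"
        using nat_le by (rule of_nat_mono)
      also have "\<dots> = (\<Sum>i<d. real (btilde TYPE('k) (V' i) E))" by (rule of_nat_sum)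
      also have "\<dots> \<le> 3 powr (real (card V) / 4)"
      proof (cases "d = 4")
        case False
        have "(\<Sum>i<d. real (btilde TYPE('k) (V' i) E)) \<le> (\<Sum>i<d. 3 powr ((real (card V) - real d - 1) / 4))"
          by (rule sum_mono) (rule terms, simp)
        also have "\<dots> = real d * 3 powr ((real (card V) - real d - 1) / 4)" by simp
        also have "\<dots> \<le> 3 powr (real (card V) / 4)" by (rule gen_ineq[OF d1 False])
        finally show ?thesis .
      next
        case True
        have c1: "real (card (V' 1)) \<le> real (card V) - 6"
        proof -
          define a where "a = ws!0"
          define w where "w = ws!1"
          have wV: "w \<in> V" using wiV[of 1] True by (simp add: w_def)
          have aV: "a \<in> V" using wiV[of 0] True by (simp add: a_def)
          have ab: "{a, w} \<notin> E" "a \<noteq> w" using ws4[OF True] by (auto simp: a_def w_def)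
          have take1: "set (take 1 ws) = {a}" using len True by (cases ws) (auto simp: a_def)
          have sub: "V' 1 \<subseteq> V - insert a (insert w (nbh V E w))"
            using Nnb take1 by (auto simp: V'_def w_def nb_def)
          have B: "insert a (insert w (nbh V E w)) \<subseteq> V" using wV aV Nsub by auto
          have anot: "a \<notin> insert w (nbh V E w)" using ab by (auto simp: nbh_def)
          have cB: "card (insert a (insert w (nbh V E w))) = deg w + 2"
            using finN wnotin anot by (simp add: deg_def)
          have dw: "d \<le> deg w" using vmin[OF wV] by (simp add: d_def)
          have "card (V' 1) \<le> card (V - insert a (insert w (nbh V E w)))" using card_mono[OF _ sub] fin by simp
          also have "\<dots> = card V - card (insert a (insert w (nbh V E w)))"
            using card_Diff_subset[OF _ B] finite_subset[OF B fin] by simp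
          finally have "card (V' 1) \<le> card V - (deg w + 2)" using cB by simp
          moreover have "deg w + 2 \<le> card V" using card_mono[OF fin B] cB by simp
          ultimately show ?thesis using dw True by linarith
        qed
        have t1: "real (btilde TYPE('k) (V' 1) E) \<le> 3 powr ((real (card V) - 6) / 4)"
        proof -
          have "real (card (V' 1)) / 4 \<le> (real (card V) - 6) / 4" using c1 by simp
          from powr3_mono[OF this] ih[of 1] True show ?thesis by linarith
        qed
        have t0: "real (btilde TYPE('k) (V' 0) E) \<le> 3 powr ((real (card V) - 5) / 4)"
          using terms[of 0] True by simp
        have t2: "real (btilde TYPE('k) (V' 2) E) \<le> 3 powr ((real (card V) - 5) / 4)"
          using terms[of 2] True by simp
        have t3: "real (btilde TYPE('k) (V' 3) E) \<le> 3 powr ((real (card V) - 5) / 4)"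
          using terms[of 3] True by simp
        have "(\<Sum>i<d. real (btilde TYPE('k) (V' i) E)) = real (btilde TYPE('k) (V' 0) E) + real (btilde TYPE('k) (V' 1) E)
            + real (btilde TYPE('k) (V' 2) E) + real (btilde TYPE('k) (V' 3) E)"
          using True by (simp add: eval_nat_numeral)
        also have "\<dots> \<le> 3 * 3 powr ((real (card V) - 5) / 4) + 3 powr ((real (card V) - 6) / 4)"
          using t0 t1 t2 t3 by linarith
        also have "\<dots> \<le> 3 powr (real (card V) / 4)" by (rule four_ineq)
        finally show ?thesis .
      qed
      finally show ?thesis .
    qed
  qed
qed

theorem proposition6p1:
  fixes V :: "'a::linorder set" and E :: "'a set set" and n :: nat
  assumes "simple_graph V E"
    and "card V \<le> n"
    and "\<not> has_clique V E 5"
  shows "real (btilde TYPE('k::field) V E) \<le> 3 powr (real n / 4)"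
proof -
  have fin: "finite V" using assms(1) by (simp add: simple_graph_def)
  have noloop: "\<forall>u. {u} \<notin> E"
  proof
    fix u show "{u} \<notin> E"
    proof
      assume "{u} \<in> E"
      then obtain a b where "a \<noteq> b" "{u} = {a, b}" using assms(1) by (auto simp: simple_graph_def)
      then have "a \<in> {u}" "b \<in> {u}" by auto
      then show False using \<open>a \<noteq> b\<close> by simp
    qed
  qed
  have "real (btilde TYPE('k) V E) \<le> 3 powr (real (card V) / 4)"
    by (rule main_bound[OF fin noloop assms(3)])
  also have "\<dots> \<le> 3 powr (real n / 4)"
    by (rule powr3_mono) (use assms(2) in simp)
  finally show ?thesis .
qed

end
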